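(* Let $G$ be a finitely generated group with finite generating set $E$ closed under inverses, $A$ a finite alphabet, and $\Phi:A^G\to A^G$ a cellular automaton. Then $\Phi$ is not sensitive to initial conditions if and only if for every $k\in\mathbb{N}$ there exists a $B_G(1_G,k)$-blocking word for $\Phi$.
   Context: $B_G(g,k)$ is the closed ball of radius $k$ in the word metric $d_E$ of $G$. The Cantor metric is $d^E(x,y)=2^{-k}$ with $k=\min\{d_E(1_G,g):x(g)\neq y(g)\}$; $B^E(x,r)$ its closed ball. A cellular automaton is a map $\Phi:A^G\to A^G$ given by a finite $S\subseteq G$ and $\mu:A^S\to A$ via $\Phi(x)(g)=\mu(s\mapsto x(gs))$. $\Phi$ is sensitive to initial conditions if $\exists\epsilon>0\,\forall x\,\forall\delta>0\,\exists t\in\mathbb{N}\,\exists y\in B^E(x,\delta)$ with $\Phi^t(y)\notin B^E(\Phi^t(x),\epsilon)$. Blocking word: for finite $V\subseteq G$ and a pattern $u\in A^L$ with $L\subseteq G$ finite, $u$ is $V$-blocking for $\Phi$ if for all $x,y\in A^G$ with $x|_L=y|_L=u$ one has $\Phi^t(x)|_V=\Phi^t(y)|_V$ for all $t\in\mathbb{N}$. *)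

theory Defs
  imports Complex_Main "HOL-Library.FuncSet"
begin

text \<open>The group G is a type of class group_add (written additively, not necessarily
commutative): the product g s is g + s and 1_G is 0.
Configurations A^G are functions of type 'g => 'a with 'a a finite type.\<close>

definition generates :: "'g::group_add set \<Rightarrow> bool" where
  "generates E \<longleftrightarrow> (\<forall>g. \<exists>xs. set xs \<subseteq> E \<and> sum_list xs = g)"

definition wlen :: "'g::group_add set \<Rightarrow> 'g \<Rightarrow> nat" where
  "wlen E g = (LEAST n. \<exists>xs. length xs = n \<and> set xs \<subseteq> E \<and> sum_list xs = g)"

definition wdist :: "'g::group_add set \<Rightarrow> 'g \<Rightarrow> 'g \<Rightarrow> nat" where
  "wdist E g h = wlen E (- g + h)"

definition gball :: "'g::group_add set \<Rightarrow> 'g \<Rightarrow> nat \<Rightarrow> 'g set" where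
  "gball E g k = {h. wdist E g h \<le> k}"

definition cdist :: "'g::group_add set \<Rightarrow> ('g \<Rightarrow> 'a) \<Rightarrow> ('g \<Rightarrow> 'a) \<Rightarrow> real" where
  "cdist E x y = (if x = y then 0
     else (1/2) ^ (LEAST k. \<exists>g. x g \<noteq> y g \<and> wdist E 0 g = k))"

definition cball :: "'g::group_add set \<Rightarrow> ('g \<Rightarrow> 'a) \<Rightarrow> real \<Rightarrow> ('g \<Rightarrow> 'a) set" where
  "cball E x r = {y. cdist E x y \<le> r}"

definition is_CA :: "(('g::group_add \<Rightarrow> 'a) \<Rightarrow> ('g \<Rightarrow> 'a)) \<Rightarrow> bool" where
  "is_CA \<Phi> \<longleftrightarrow> (\<exists>S (\<mu> :: ('g \<Rightarrow> 'a) \<Rightarrow> 'a). finite S \<and>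
      (\<forall>x g. \<Phi> x g = \<mu> (restrict (\<lambda>s. x (g + s)) S)))"

definition sensitive :: "'g::group_add set \<Rightarrow> (('g \<Rightarrow> 'a) \<Rightarrow> ('g \<Rightarrow> 'a)) \<Rightarrow> bool" where
  "sensitive E \<Phi> \<longleftrightarrow> (\<exists>\<epsilon>>0. \<forall>x. \<forall>\<delta>>0. \<exists>t::nat. \<exists>y \<in> cball E x \<delta>.
      (\<Phi> ^^ t) y \<notin> cball E ((\<Phi> ^^ t) x) \<epsilon>)"

text \<open>u (pattern on the finite support L; values outside L are irrelevant) is V-blocking.\<close>
definition blocking :: "(('g \<Rightarrow> 'a) \<Rightarrow> ('g \<Rightarrow> 'a)) \<Rightarrow> 'g set \<Rightarrow> 'g set \<Rightarrow> ('g \<Rightarrow> 'a) \<Rightarrow> bool" where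
  "blocking \<Phi> V L u \<longleftrightarrow> (\<forall>x y. (\<forall>l\<in>L. x l = u l \<and> y l = u l) \<longrightarrow>
      (\<forall>t::nat. \<forall>v\<in>V. (\<Phi> ^^ t) x v = (\<Phi> ^^ t) y v))"

end

theory Submission
  imports Defs
begin

lemma wd0: "wdist E 0 g = wlen E g"
  by (simp add: wdist_def)

lemma cdist_le:
  "cdist E x y \<le> (1/2::real)^m \<longleftrightarrow> (\<forall>g. wlen E g < m \<longrightarrow> x g = y g)"
proof
  assume H: "cdist E x y \<le> (1/2::real)^m"
  show "\<forall>g. wlen E g < m \<longrightarrow> x g = y g"
  proof (intro allI impI, rule ccontr)
    fix g assume g: "wlen E g < m" "x g \<noteq> y g"
    then have ne: "x \<noteq> y" by auto
    let ?K = "LEAST k. \<exists>g. x g \<noteq> y g \<and> wdist E 0 g = k"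
    have "?K \<le> wlen E g" by (rule Least_le) (use g in \<open>auto simp: wd0\<close>)
    then have "?K < m" using g by simp
    then have "(1/2::real)^m < (1/2)^?K" by (intro power_strict_decreasing) auto
    with H ne show False by (simp add: cdist_def)
  qed
next
  assume H: "\<forall>g. wlen E g < m \<longrightarrow> x g = y g"
  show "cdist E x y \<le> (1/2::real)^m"
  proof (cases "x = y")
    case True then show ?thesis by (simp add: cdist_def)
  next
    case False
    then obtain g0 where "x g0 \<noteq> y g0" by auto
    let ?K = "LEAST k. \<exists>g. x g \<noteq> y g \<and> wdist E 0 g = k"
    have "\<exists>g. x g \<noteq> y g \<and> wdist E 0 g = ?K"
      by (rule LeastI_ex) (use \<open>x g0 \<noteq> y g0\<close> in blast)
    then obtain g where "x g \<noteq> y g" "wlen E g = ?K" by (auto simp: wd0)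
    with H have "m \<le> ?K" by (metis not_le)
    then have "(1/2::real)^?K \<le> (1/2)^m" by (intro power_decreasing) auto
    with False show ?thesis by (simp add: cdist_def)
  qed
qed

lemma gball0: "gball E 0 k = {g. wlen E g < Suc k}"
  by (auto simp: gball_def wd0)

lemma finite_small:
  assumes "finite E" "generates E"
  shows "finite {g. wlen E g < m}"
proof -
  have "{g. wlen E g < m} \<subseteq> sum_list ` {xs. set xs \<subseteq> E \<and> length xs \<le> m}"
  proof
    fix g assume "g \<in> {g. wlen E g < m}"
    then have lt: "wlen E g < m" by simp
    from assms(2) obtain xs where "set xs \<subseteq> E" "sum_list xs = g"
      unfolding generates_def by blast
    then have "\<exists>n xs. length xs = n \<and> set xs \<subseteq> E \<and> sum_list xs = g" by blast
    then have "\<exists>xs. length xs = wlen E g \<and> set xs \<subseteq> E \<and> sum_list xs = g"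
      unfolding wlen_def by (rule LeastI_ex)
    then obtain ys where "length ys = wlen E g" "set ys \<subseteq> E" "sum_list ys = g" by blast
    with lt show "g \<in> sum_list ` {xs. set xs \<subseteq> E \<and> length xs \<le> m}" by force
  qed
  moreover have "finite {xs. set xs \<subseteq> E \<and> length xs \<le> m}"
    using finite_lists_length_le[OF assms(1)] by simp
  ultimately show ?thesis by (meson finite_imageI finite_subset)
qed

theorem proposition2:
  fixes E :: "'g::group_add set"
    and \<Phi> :: "('g \<Rightarrow> 'a::finite) \<Rightarrow> ('g \<Rightarrow> 'a)"
  assumes "finite E"
    and "\<forall>e\<in>E. - e \<in> E"
    and "generates E"
    and "is_CA \<Phi>"
  shows "\<not> sensitive E \<Phi> \<longleftrightarrow>
    (\<forall>k::nat. \<exists>L u. finite L \<and> blocking \<Phi> (gball E 0 k) L u)"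
proof
  assume ns: "\<not> sensitive E \<Phi>"
  show "\<forall>k::nat. \<exists>L u. finite L \<and> blocking \<Phi> (gball E 0 k) L u"
  proof
    fix k :: nat
    have "(0::real) < (1/2)^Suc k" by simp
    with ns obtain x \<delta> where d: "\<delta> > 0" and
      P: "\<forall>t. \<forall>y \<in> cball E x \<delta>. (\<Phi> ^^ t) y \<in> cball E ((\<Phi> ^^ t) x) ((1/2)^Suc k)"
      unfolding sensitive_def by blast
    obtain m where m: "(1/2::real)^m < \<delta>" using real_arch_pow_inv[OF d, of "1/2"] by auto
    define L where "L = {g. wlen E g < m}"
    have fL: "finite L" unfolding L_def by (rule finite_small[OF assms(1,3)])
    have "blocking \<Phi> (gball E 0 k) L x"
      unfolding blocking_def
    proof (intro allI impI ballI)
      fix y z t v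
      assume yz: "\<forall>l\<in>L. y l = x l \<and> z l = x l" and v: "v \<in> gball E 0 k"
      have "cdist E x y \<le> (1/2)^m" using yz unfolding cdist_le L_def by auto
      then have "y \<in> cball E x \<delta>" using m by (simp add: cball_def)
      with P have "cdist E ((\<Phi> ^^ t) x) ((\<Phi> ^^ t) y) \<le> (1/2)^Suc k" by (simp add: cball_def)
      then have 1: "(\<Phi> ^^ t) x v = (\<Phi> ^^ t) y v" using v unfolding cdist_le gball0 by auto
      have "cdist E x z \<le> (1/2)^m" using yz unfolding cdist_le L_def by auto
      then have "z \<in> cball E x \<delta>" using m by (simp add: cball_def)
      with P have "cdist E ((\<Phi> ^^ t) x) ((\<Phi> ^^ t) z) \<le> (1/2)^Suc k" by (simp add: cball_def)
      then have 2: "(\<Phi> ^^ t) x v = (\<Phi> ^^ t) z v" using v unfolding cdist_le gball0 by auto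
      from 1 2 show "(\<Phi> ^^ t) y v = (\<Phi> ^^ t) z v" by simp
    qed
    with fL show "\<exists>L u. finite L \<and> blocking \<Phi> (gball E 0 k) L u" by blast
  qed
next
  assume B: "\<forall>k::nat. \<exists>L u. finite L \<and> blocking \<Phi> (gball E 0 k) L u"
  show "\<not> sensitive E \<Phi>"
    unfolding sensitive_def
  proof (intro notI, elim exE conjE)
    fix \<epsilon> :: real
    assume e: "\<epsilon> > 0" and S: "\<forall>x. \<forall>\<delta>>0. \<exists>t. \<exists>y\<in>cball E x \<delta>.
        (\<Phi> ^^ t) y \<notin> cball E ((\<Phi> ^^ t) x) \<epsilon>"
    obtain k where k: "(1/2::real)^k < \<epsilon>" using real_arch_pow_inv[OF e, of "1/2"] by auto
    from B obtain L u where fL: "finite L" and bl: "blocking \<Phi> (gball E 0 k) L u" by blast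
    define m where "m = Suc (Max (insert 0 (wlen E ` L)))"
    have mL: "\<forall>l\<in>L. wlen E l < m"
      using fL unfolding m_def by (simp add: le_imp_less_Suc)
    have "(0::real) < (1/2)^m" by simp
    with S obtain t y where y: "y \<in> cball E u ((1/2)^m)"
      and ny: "(\<Phi> ^^ t) y \<notin> cball E ((\<Phi> ^^ t) u) \<epsilon>" by blast
    have "\<forall>g. wlen E g < m \<longrightarrow> u g = y g" using y unfolding cball_def cdist_le by simp
    then have "\<forall>l\<in>L. y l = u l \<and> u l = u l" using mL by auto
    then have eq: "\<forall>v\<in>gball E 0 k. (\<Phi> ^^ t) y v = (\<Phi> ^^ t) u v"
      using bl unfolding blocking_def by blast
    have "(1/2::real)^Suc k \<le> (1/2)^k" by (intro power_decreasing) auto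
    have "cdist E ((\<Phi> ^^ t) u) ((\<Phi> ^^ t) y) \<le> (1/2)^Suc k"
      unfolding cdist_le using eq by (auto simp: gball0)
    then have "cdist E ((\<Phi> ^^ t) u) ((\<Phi> ^^ t) y) \<le> \<epsilon>"
      using k \<open>(1/2::real)^Suc k \<le> (1/2)^k\<close> by linarith
    with ny show False by (simp add: cball_def)
  qed
qed

end
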